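(* Let $G$ be a group, $\mathfrak g=(g_1,g_2,g_3)$ a string of elements of $G$ and $\mathcal E=\{E_1,E_2,E_3\}$ a partition of $G$ such that $Con(\mathfrak g,\mathcal E)=\{C_1,\dots,C_5\}$ with $C_1=(1,2,3,2)$, $C_2=(1,3,1,3)$, $C_3=(2,1,2,2)$, $C_4=(3,3,1,2)$, $C_5=(3,3,2,1)$. Then $Eq(\mathfrak g,\mathcal E)$ has a normal subsystem, $G$ is non-amenable, and $\tau(G)\le 7$.
   Context: A configuration of $(\mathfrak g,\mathcal E)$ is a tuple $C=(c_0,\dots,c_3)\in\{1,2,3\}^4$ such that some $x\in G$ has $x\in E_{c_0}$ and $g_ix\in E_{c_i}$ for $i=1,2,3$; $Con(\mathfrak g,\mathcal E)$ is the set of all configurations. $Eq(\mathfrak g,\mathcal E)$: variables $f_C$, equations $\sum_{C:\,c_j=i}f_C=\sum_{C:\,c_k=i}f_C$ for all $i$ and $0\le j,k\le 3$, each written $aX=bX$ with $a,b\in\{0,1\}^5$ indicator vectors; a subsystem is a finite list (repetitions allowed, sides may be swapped) of such equations $A_tX=B_tX$, written $(B-A)X=0$. Normality: with $\sum_t(B_t-A_t)$ strictly positive, $T$ the lower triangular all-ones matrix, and $P^+$ the permutation matrix $P$ with rows cyclically shifted up by one, the system is normal if for some permutation matrix $P$ all entries of $TP(B-A)-P^+A$ are integers $\ge-1$. Tarski number $\tau(G)$: minimum of $r+s$ over complete paradoxical decompositions, i.e. partitions $\{A_1,\dots,A_r,B_1,\dots,B_s\}$ of $G$ with $a_i,b_j\in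 G$ such that $\{a_iA_i\}$ and $\{b_jB_j\}$ each partition $G$. *)

theory Defs
  imports "HOL-Algebra.Group" "HOL-Library.Extended_Nat"
begin

text \<open>A string g = (g_1,g_2,g_3) is a function on indices 1,2,3; a partition
  E = {E_1,E_2,E_3} is a function on indices 1,2,3. A configuration is a
  list [c_0,c_1,c_2,c_3] of length 4 with entries in {1,2,3}.\<close>

definition Con :: "('a, 'b) monoid_scheme \<Rightarrow> (nat \<Rightarrow> 'a) \<Rightarrow> (nat \<Rightarrow> 'a set) \<Rightarrow> nat list set" where
  "Con G g E = {c. length c = 4 \<and> set c \<subseteq> {1,2,3} \<and>
      (\<exists>x\<in>carrier G. x \<in> E (c!0) \<and> (\<forall>i\<in>{1,2,3}. g i \<otimes>\<^bsub>G\<^esub> x \<in> E (c!i)))}"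

text \<open>Variables f_C are indexed by positions 0..n-1 of an enumeration cs of Con.
  Vectors of length n and matrices are functions to int with explicit dimensions.\<close>

definition eq_vec :: "nat list list \<Rightarrow> nat \<Rightarrow> nat \<Rightarrow> nat \<Rightarrow> int" where
  "eq_vec cs j i = (\<lambda>c. if c < length cs \<and> cs ! c ! j = i then 1 else 0)"

text \<open>The equations of Eq, each written as a pair (a,b) meaning aX = bX.\<close>
definition Eq_sys :: "nat list list \<Rightarrow> ((nat \<Rightarrow> int) \<times> (nat \<Rightarrow> int)) set" where
  "Eq_sys cs = {(eq_vec cs j i, eq_vec cs k i) | i j k. i \<in> {1,2,3} \<and> j < 4 \<and> k < 4}"

definition matmul :: "nat \<Rightarrow> (nat \<Rightarrow> nat \<Rightarrow> int) \<Rightarrow> (nat \<Rightarrow> nat \<Rightarrow> int) \<Rightarrow> nat \<Rightarrow> nat \<Rightarrow> int" where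
  "matmul m X Y = (\<lambda>i j. \<Sum>k<m. X i k * Y k j)"

definition lower_ones :: "nat \<Rightarrow> nat \<Rightarrow> int" where
  "lower_ones = (\<lambda>i j. if j \<le> i then 1 else 0)"

definition is_perm_matrix :: "nat \<Rightarrow> (nat \<Rightarrow> nat \<Rightarrow> int) \<Rightarrow> bool" where
  "is_perm_matrix m P \<longleftrightarrow>
     (\<forall>i<m. \<forall>j<m. P i j \<in> {0,1}) \<and>
     (\<forall>i<m. \<exists>!j. j < m \<and> P i j = 1) \<and>
     (\<forall>j<m. \<exists>!i. i < m \<and> P i j = 1)"

definition shift_up :: "nat \<Rightarrow> (nat \<Rightarrow> nat \<Rightarrow> int) \<Rightarrow> nat \<Rightarrow> nat \<Rightarrow> int" where
  "shift_up m P = (\<lambda>i j. P ((i + 1) mod m) j)"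

definition normal_system :: "nat \<Rightarrow> ((nat \<Rightarrow> int) \<times> (nat \<Rightarrow> int)) list \<Rightarrow> bool" where
  "normal_system n sys \<longleftrightarrow>
     (let m = length sys;
          A = (\<lambda>t c. fst (sys ! t) c);
          B = (\<lambda>t c. snd (sys ! t) c);
          D = (\<lambda>t c. B t c - A t c)
      in (\<forall>c<n. (\<Sum>t<m. D t c) > 0) \<and>
         (\<exists>P. is_perm_matrix m P \<and>
             (\<forall>i<m. \<forall>c<n. matmul m lower_ones (matmul m P D) i c
                              - matmul m (shift_up m P) A i c \<ge> -1)))"

definition has_normal_subsystem :: "nat list list \<Rightarrow> bool" where
  "has_normal_subsystem cs \<longleftrightarrow>
     (\<exists>sys. sys \<noteq> [] \<and> set sys \<subseteq> Eq_sys cs \<and> normal_system (length cs) sys)"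

definition amenable :: "('a, 'b) monoid_scheme \<Rightarrow> bool" where
  "amenable G \<longleftrightarrow> (\<exists>\<mu> :: 'a set \<Rightarrow> real.
      (\<forall>A\<subseteq>carrier G. \<mu> A \<ge> 0) \<and> \<mu> (carrier G) = 1 \<and>
      (\<forall>A\<subseteq>carrier G. \<forall>B\<subseteq>carrier G. A \<inter> B = {} \<longrightarrow> \<mu> (A \<union> B) = \<mu> A + \<mu> B) \<and>
      (\<forall>x\<in>carrier G. \<forall>A\<subseteq>carrier G. \<mu> ((\<lambda>y. x \<otimes>\<^bsub>G\<^esub> y) ` A) = \<mu> A))"

definition indexed_partition :: "('a, 'b) monoid_scheme \<Rightarrow> 'i set \<Rightarrow> ('i \<Rightarrow> 'a set) \<Rightarrow> bool" where
  "indexed_partition G I F \<longleftrightarrow>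
     (\<forall>i\<in>I. \<forall>j\<in>I. i \<noteq> j \<longrightarrow> F i \<inter> F j = {}) \<and> (\<Union>i\<in>I. F i) = carrier G"

definition complete_paradoxical_decomposition ::
  "('a, 'b) monoid_scheme \<Rightarrow> nat \<Rightarrow> nat \<Rightarrow> (nat \<Rightarrow> 'a set) \<Rightarrow> (nat \<Rightarrow> 'a set)
     \<Rightarrow> (nat \<Rightarrow> 'a) \<Rightarrow> (nat \<Rightarrow> 'a) \<Rightarrow> bool" where
  "complete_paradoxical_decomposition G r s A B a b \<longleftrightarrow>
     indexed_partition G (Inl ` {..<r} \<union> Inr ` {..<s}) (case_sum A B) \<and>
     (\<forall>i<r. a i \<in> carrier G) \<and> (\<forall>j<s. b j \<in> carrier G) \<and>
     indexed_partition G {..<r} (\<lambda>i. (\<lambda>y. a i \<otimes>\<^bsub>G\<^esub> y) ` A i) \<and>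
     indexed_partition G {..<s} (\<lambda>j. (\<lambda>y. b j \<otimes>\<^bsub>G\<^esub> y) ` B j)"

text \<open>Minimum of r+s over complete paradoxical decompositions (\<infinity> if none).\<close>
definition tarski_number :: "('a, 'b) monoid_scheme \<Rightarrow> enat" where
  "tarski_number G = (INF rs \<in> {(r, s). \<exists>A B a b. complete_paradoxical_decomposition G r s A B a b}.
                         enat (fst rs + snd rs))"

end

theory Submission
  imports Defs
begin

locale cfgloc = group G for G (structure) +
  fixes g :: "nat \<Rightarrow> 'a" and E :: "nat \<Rightarrow> 'a set"
  assumes gi: "\<forall>i\<in>{1,2,3}. g i \<in> carrier G"
    and part: "indexed_partition G {1,2,3} E"
    and con: "Con G g E = {[1,2,3,2], [1,3,1,3], [2,1,2,2], [3,3,1,2], [3,3,2,1]}"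
begin

lemma g1: "g 1 \<in> carrier G" and g2: "g 2 \<in> carrier G" and g3: "g 3 \<in> carrier G"
  using gi by auto

lemma E_sub: "i\<in>{1,2,3} \<Longrightarrow> E i \<subseteq> carrier G"
  using part unfolding indexed_partition_def by blast

lemma E_disj: "x\<in>E i \<Longrightarrow> x\<in>E j \<Longrightarrow> i\<in>{1,2,3} \<Longrightarrow> j\<in>{1,2,3} \<Longrightarrow> i=j"
  using part unfolding indexed_partition_def by blast

lemma E_cover: "x\<in>carrier G \<Longrightarrow> \<exists>i\<in>{1,2,3}. x\<in>E i"
  using part unfolding indexed_partition_def by blast

definition col :: "'a \<Rightarrow> nat" where
  "col x = (THE i. i\<in>{1,2,3} \<and> x\<in>E i)"

lemma col: "x\<in>carrier G \<Longrightarrow> col x \<in> {1,2,3} \<and> x \<in> E (col x)"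
proof -
  assume x: "x\<in>carrier G"
  then obtain i where i: "i\<in>{1,2,3}" "x\<in>E i" using E_cover by blast
  have "col x = i" unfolding col_def
    by (rule the_equality) (use i E_disj in blast)+
  thus ?thesis using i by simp
qed

lemma cfg5:
  assumes x: "x\<in>carrier G"
  shows "(col x=1 \<and> col(g 1 \<otimes> x)=2 \<and> col(g 2 \<otimes> x)=3 \<and> col(g 3 \<otimes> x)=2) \<or>
         (col x=1 \<and> col(g 1 \<otimes> x)=3 \<and> col(g 2 \<otimes> x)=1 \<and> col(g 3 \<otimes> x)=3) \<or>
         (col x=2 \<and> col(g 1 \<otimes> x)=1 \<and> col(g 2 \<otimes> x)=2 \<and> col(g 3 \<otimes> x)=2) \<or>
         (col x=3 \<and> col(g 1 \<otimes> x)=3 \<and> col(g 2 \<otimes> x)=1 \<and> col(g 3 \<otimes> x)=2) \<or>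
         (col x=3 \<and> col(g 1 \<otimes> x)=3 \<and> col(g 2 \<otimes> x)=2 \<and> col(g 3 \<otimes> x)=1)"
proof -
  let ?c = "[col x, col(g 1 \<otimes> x), col(g 2 \<otimes> x), col(g 3 \<otimes> x)]"
  have c0: "col x \<in> {1,2,3} \<and> x \<in> E (col x)" using col x by blast
  have c1: "col (g 1 \<otimes> x) \<in> {1,2,3} \<and> g 1 \<otimes> x \<in> E (col (g 1 \<otimes> x))" using col x g1 by blast
  have c2: "col (g 2 \<otimes> x) \<in> {1,2,3} \<and> g 2 \<otimes> x \<in> E (col (g 2 \<otimes> x))" using col x g2 by blast
  have c3: "col (g 3 \<otimes> x) \<in> {1,2,3} \<and> g 3 \<otimes> x \<in> E (col (g 3 \<otimes> x))" using col x g3 by blast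
  have "?c \<in> Con G g E" unfolding Con_def
    using c0 c1 c2 c3 x by auto
  thus ?thesis unfolding con by auto
qed

lemma col_pos: "x\<in>carrier G \<Longrightarrow> col x \<in> {1,2,3}" using col by blast

definition "T1 = {x\<in>carrier G. col x = 1 \<and> col (g 1 \<otimes> x) = 2}"
definition "T2 = {x\<in>carrier G. col x = 1 \<and> col (g 1 \<otimes> x) = 3}"
definition "T3 = {x\<in>carrier G. col x = 2}"
definition "T4 = {x\<in>carrier G. col x = 3 \<and> col (g 3 \<otimes> x) = 2}"
definition "T5 = {x\<in>carrier G. col x = 3 \<and> col (g 3 \<otimes> x) = 1}"

lemmas Tdefs = T1_def T2_def T3_def T4_def T5_def

lemma T_cover: "x\<in>carrier G \<Longrightarrow> x\<in>T1 \<or> x\<in>T2 \<or> x\<in>T3 \<or> x\<in>T4 \<or> x\<in>T5"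
  using cfg5[of x] unfolding Tdefs by auto

lemma T_sub: "T1 \<subseteq> carrier G" "T2 \<subseteq> carrier G" "T3 \<subseteq> carrier G" "T4 \<subseteq> carrier G" "T5 \<subseteq> carrier G"
  unfolding Tdefs by auto

lemma img_eq:
  assumes a: "a\<in>carrier G" and A: "A \<subseteq> carrier G" and B: "B \<subseteq> carrier G"
    and f: "\<And>x. x\<in>A \<Longrightarrow> a\<otimes>x\<in>B" and b: "\<And>y. y\<in>B \<Longrightarrow> inv a \<otimes> y \<in> A"
  shows "(\<lambda>y. a\<otimes>y) ` A = B"
proof
  show "(\<lambda>y. a\<otimes>y) ` A \<subseteq> B" using f by auto
  show "B \<subseteq> (\<lambda>y. a\<otimes>y) ` A"
  proof
    fix y assume y: "y\<in>B"
    have "a \<otimes> (inv a \<otimes> y) = y" using a y B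
      by (metis inv_closed l_one m_assoc r_inv subsetD)
    thus "y \<in> (\<lambda>y. a\<otimes>y) ` A" using b[OF y] by (metis image_eqI)
  qed
qed

lemma img_filter:
  "(\<lambda>y. a\<otimes>y)`{x\<in>X. P (a\<otimes>x)} = {y\<in>(\<lambda>y. a\<otimes>y)`X. P y}"
  by auto

lemma img_comp:
  assumes "a\<in>carrier G" "b\<in>carrier G" "A\<subseteq>carrier G"
  shows "(\<lambda>y. (a\<otimes>b)\<otimes>y)`A = (\<lambda>y. a\<otimes>y)`((\<lambda>y. b\<otimes>y)`A)"
  using assms by (auto simp: m_assoc image_image subset_iff)

lemma inv_mult: "a\<in>carrier G \<Longrightarrow> y\<in>carrier G \<Longrightarrow> a \<otimes> (inv a \<otimes> y) = y"
  by (metis inv_closed l_one m_assoc r_inv)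

lemma im1: "(\<lambda>y. g 1\<otimes>y) ` T3 = T1 \<union> T2"
proof (rule img_eq[OF g1 T_sub(3)])
  show "T1 \<union> T2 \<subseteq> carrier G" using T_sub by auto
  fix x assume x: "x\<in>T3"
  hence xc: "x\<in>carrier G" unfolding T3_def by auto
  show "g 1 \<otimes> x \<in> T1 \<union> T2" using x cfg5[OF xc] cfg5[of "g 1 \<otimes> x"] g1 xc unfolding Tdefs by auto
next
  fix y assume y: "y \<in> T1 \<union> T2"
  hence yc: "y\<in>carrier G" unfolding Tdefs by auto
  have z: "inv g 1 \<otimes> y \<in> carrier G" using yc g1 by auto
  show "inv g 1 \<otimes> y \<in> T3" using y cfg5[OF z] z inv_mult[OF g1 yc] unfolding Tdefs by auto
qed

lemma im2: "(\<lambda>y. g 1\<otimes>y) ` T1 = T3"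
proof (rule img_eq[OF g1 T_sub(1) T_sub(3)])
  fix x assume x: "x\<in>T1"
  hence xc: "x\<in>carrier G" unfolding Tdefs by auto
  show "g 1 \<otimes> x \<in> T3" using x cfg5[OF xc] g1 xc unfolding Tdefs by auto
next
  fix y assume y: "y \<in> T3"
  hence yc: "y\<in>carrier G" unfolding Tdefs by auto
  have z: "inv g 1 \<otimes> y \<in> carrier G" using yc g1 by auto
  show "inv g 1 \<otimes> y \<in> T1" using y cfg5[OF z] z inv_mult[OF g1 yc] unfolding Tdefs by auto
qed

lemma im3: "(\<lambda>y. g 3\<otimes>y) ` T2 = T4 \<union> T5"
proof (rule img_eq[OF g3 T_sub(2)])
  show "T4 \<union> T5 \<subseteq> carrier G" using T_sub by auto
  fix x assume x: "x\<in>T2"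
  hence xc: "x\<in>carrier G" unfolding Tdefs by auto
  show "g 3 \<otimes> x \<in> T4 \<union> T5" using x cfg5[OF xc] cfg5[of "g 3 \<otimes> x"] g3 xc unfolding Tdefs by auto
next
  fix y assume y: "y \<in> T4 \<union> T5"
  hence yc: "y\<in>carrier G" unfolding Tdefs by auto
  have z: "inv g 3 \<otimes> y \<in> carrier G" using yc g3 by auto
  show "inv g 3 \<otimes> y \<in> T2" using y cfg5[OF z] z inv_mult[OF g3 yc] unfolding Tdefs by auto
qed

lemma im4: "(\<lambda>y. g 3\<otimes>y) ` T5 = T1 \<union> T2"
proof (rule img_eq[OF g3 T_sub(5)])
  show "T1 \<union> T2 \<subseteq> carrier G" using T_sub by auto
  fix x assume x: "x\<in>T5"
  hence xc: "x\<in>carrier G" unfolding Tdefs by auto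
  show "g 3 \<otimes> x \<in> T1 \<union> T2" using x cfg5[OF xc] cfg5[of "g 3 \<otimes> x"] g3 xc unfolding Tdefs by auto
next
  fix y assume y: "y \<in> T1 \<union> T2"
  hence yc: "y\<in>carrier G" unfolding Tdefs by auto
  have z: "inv g 3 \<otimes> y \<in> carrier G" using yc g3 by auto
  show "inv g 3 \<otimes> y \<in> T5" using y cfg5[OF z] z inv_mult[OF g3 yc] unfolding Tdefs by auto
qed

lemma im5: "(\<lambda>y. g 2\<otimes>y) ` (T2 \<union> T4) = T1 \<union> T2"
proof (rule img_eq[OF g2])
  show "T1 \<union> T2 \<subseteq> carrier G" "T2 \<union> T4 \<subseteq> carrier G" using T_sub by auto
  fix x assume x: "x\<in>T2 \<union> T4"
  hence xc: "x\<in>carrier G" unfolding Tdefs by auto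
  show "g 2 \<otimes> x \<in> T1 \<union> T2" using x cfg5[OF xc] cfg5[of "g 2 \<otimes> x"] g2 xc unfolding Tdefs by auto
next
  fix y assume y: "y \<in> T1 \<union> T2"
  hence yc: "y\<in>carrier G" unfolding Tdefs by auto
  have z: "inv g 2 \<otimes> y \<in> carrier G" using yc g2 by auto
  show "inv g 2 \<otimes> y \<in> T2 \<union> T4" using y cfg5[OF z] z inv_mult[OF g2 yc] unfolding Tdefs by auto
qed

definition "A0 = {x\<in>T3. g 1 \<otimes> x \<in> T1}"
definition "A1 = {x\<in>T3. g 1 \<otimes> x \<in> T2}"
definition "B0 = {x\<in>T1. g 1 \<otimes> (g 1 \<otimes> x) \<in> T1}"
definition "B1 = {x\<in>T1. g 1 \<otimes> (g 1 \<otimes> x) \<in> T2}"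

lemma A0_sub: "A0 \<subseteq> carrier G" and A1_sub: "A1 \<subseteq> carrier G"
  and B0_sub: "B0 \<subseteq> carrier G" and B1_sub: "B1 \<subseteq> carrier G"
  unfolding A0_def A1_def B0_def B1_def using T_sub by auto

lemma imA0': "(\<lambda>y. g 1\<otimes>y) ` A0 = T1"
  unfolding A0_def img_filter[of "g 1" T3 "\<lambda>y. y \<in> T1"] im1 by auto
lemma imA1': "(\<lambda>y. g 1\<otimes>y) ` A1 = T2"
  unfolding A1_def img_filter[of "g 1" T3 "\<lambda>y. y \<in> T2"] im1 by auto
lemma imB0': "(\<lambda>y. g 1\<otimes>y) ` B0 = A0"
  unfolding B0_def img_filter[of "g 1" T1 "\<lambda>y. g 1 \<otimes> y \<in> T1"] im2 A0_def by auto
lemma imB1': "(\<lambda>y. g 1\<otimes>y) ` B1 = A1"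
  unfolding B1_def img_filter[of "g 1" T1 "\<lambda>y. g 1 \<otimes> y \<in> T2"] im2 A1_def by auto

lemma imA0: "(\<lambda>y. (g 1 \<otimes> g 1)\<otimes>y) ` A0 = T3"
  using img_comp[OF g1 g1 A0_sub] imA0' im2 by simp
lemma imA1: "(\<lambda>y. (g 3 \<otimes> g 1)\<otimes>y) ` A1 = T4 \<union> T5"
  using img_comp[OF g3 g1 A1_sub] imA1' im3 by simp
lemma imB0: "(\<lambda>y. ((g 1 \<otimes> g 1) \<otimes> g 1)\<otimes>y) ` B0 = T3"
  using img_comp[OF _ g1 B0_sub, of "g 1 \<otimes> g 1"] g1 imB0' imA0 by simp
lemma imB1: "(\<lambda>y. ((g 3 \<otimes> g 1) \<otimes> g 1)\<otimes>y) ` B1 = T4 \<union> T5"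
  using img_comp[OF _ g1 B1_sub, of "g 3 \<otimes> g 1"] g1 g3 imB1' imA1 by simp

lemma A01: "A0 \<union> A1 = T3"
  using im1 unfolding A0_def A1_def by auto
lemma B01: "B0 \<union> B1 = T1"
  using imB0' imB1' A01 im2 unfolding B0_def B1_def A0_def A1_def by auto

lemma not_amenable: "\<not> amenable G"
proof
  assume "amenable G"
  then obtain \<mu> :: "'a set \<Rightarrow> real" where
    pos: "\<forall>A\<subseteq>carrier G. \<mu> A \<ge> 0" and one: "\<mu> (carrier G) = 1" and
    add: "\<forall>A\<subseteq>carrier G. \<forall>B\<subseteq>carrier G. A \<inter> B = {} \<longrightarrow> \<mu> (A \<union> B) = \<mu> A + \<mu> B" and
    inv: "\<forall>x\<in>carrier G. \<forall>A\<subseteq>carrier G. \<mu> ((\<lambda>y. x \<otimes> y) ` A) = \<mu> A"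
    unfolding amenable_def by (elim exE conjE) (rule that)
  have addI: "\<And>A B. A\<subseteq>carrier G \<Longrightarrow> B\<subseteq>carrier G \<Longrightarrow> A \<inter> B = {} \<Longrightarrow> \<mu> (A \<union> B) = \<mu> A + \<mu> B"
    using add by blast
  have invI: "\<And>x A. x\<in>carrier G \<Longrightarrow> A\<subseteq>carrier G \<Longrightarrow> \<mu> ((\<lambda>y. x \<otimes> y) ` A) = \<mu> A"
    using inv by blast
  have d: "T1 \<inter> T2 = {}" "T4 \<inter> T5 = {}" "(T1 \<union> T2) \<inter> T3 = {}" "(T1 \<union> T2 \<union> T3) \<inter> (T4 \<union> T5) = {}"
    unfolding Tdefs by auto
  have s12: "\<mu> (T1 \<union> T2) = \<mu> T1 + \<mu> T2" using addI[OF T_sub(1) T_sub(2) d(1)] .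
  have s45: "\<mu> (T4 \<union> T5) = \<mu> T4 + \<mu> T5" using addI[OF T_sub(4) T_sub(5) d(2)] .
  have s123: "\<mu> (T1 \<union> T2 \<union> T3) = \<mu> (T1 \<union> T2) + \<mu> T3"
    by (rule addI[OF _ T_sub(3) d(3)]) (use T_sub in auto)
  have sall: "\<mu> (T1 \<union> T2 \<union> T3 \<union> (T4 \<union> T5)) = \<mu> (T1 \<union> T2 \<union> T3) + \<mu> (T4 \<union> T5)"
    by (rule addI[OF _ _ d(4)]) (use T_sub in auto)
  have cov: "T1 \<union> T2 \<union> T3 \<union> (T4 \<union> T5) = carrier G" using T_cover T_sub by blast
  have e1: "\<mu> (T1 \<union> T2) = \<mu> T3" using invI[OF g1 T_sub(3)] unfolding im1 .
  have e2: "\<mu> T3 = \<mu> T1" using invI[OF g1 T_sub(1)] unfolding im2 .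
  have e3: "\<mu> (T4 \<union> T5) = \<mu> T2" using invI[OF g3 T_sub(2)] unfolding im3 .
  have e4: "\<mu> (T1 \<union> T2) = \<mu> T5" using invI[OF g3 T_sub(5)] unfolding im4 .
  have p: "\<mu> T1 \<ge> 0" "\<mu> T2 \<ge> 0" "\<mu> T3 \<ge> 0" "\<mu> T4 \<ge> 0" "\<mu> T5 \<ge> 0" using pos T_sub by auto
  have "\<mu> (carrier G) = 0" using s12 s45 s123 sall e1 e2 e3 e4 p unfolding cov[symmetric] by linarith
  thus False using one by simp
qed

lemma lt3: "{..<3::nat} = {0,1,2}" by auto

lemma ip3: "indexed_partition G {..<3} (F :: nat \<Rightarrow> 'a set) \<longleftrightarrow>
   F 0 \<inter> F 1 = {} \<and> F 0 \<inter> F 2 = {} \<and> F 1 \<inter> F 2 = {} \<and> F 0 \<union> F 1 \<union> F 2 = carrier G"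
  unfolding indexed_partition_def lt3 by auto

lemma cover6: "A0 \<union> A1 \<union> T5 \<union> B0 \<union> B1 \<union> (T2 \<union> T4) = carrier G"
proof -
  have "A0 \<union> A1 \<union> T5 \<union> B0 \<union> B1 \<union> (T2 \<union> T4) = (A0 \<union> A1) \<union> (B0 \<union> B1) \<union> T2 \<union> T4 \<union> T5"
    by auto
  also have "\<dots> = T3 \<union> T1 \<union> T2 \<union> T4 \<union> T5" by (simp only: A01 B01)
  also have "\<dots> = carrier G"
  proof
    show "T3 \<union> T1 \<union> T2 \<union> T4 \<union> T5 \<subseteq> carrier G" using T_sub by auto
    show "carrier G \<subseteq> T3 \<union> T1 \<union> T2 \<union> T4 \<union> T5"
    proof
      fix x assume "x \<in> carrier G"
      from T_cover[OF this] show "x \<in> T3 \<union> T1 \<union> T2 \<union> T4 \<union> T5" by blast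
    qed
  qed
  finally show ?thesis .
qed

lemma disj6:
  "A0 \<inter> A1 = {}" "A0 \<inter> T5 = {}" "A0 \<inter> B0 = {}" "A0 \<inter> B1 = {}" "A0 \<inter> (T2 \<union> T4) = {}"
  "A1 \<inter> T5 = {}" "A1 \<inter> B0 = {}" "A1 \<inter> B1 = {}" "A1 \<inter> (T2 \<union> T4) = {}"
  "T5 \<inter> B0 = {}" "T5 \<inter> B1 = {}" "T5 \<inter> (T2 \<union> T4) = {}"
  "B0 \<inter> B1 = {}" "B0 \<inter> (T2 \<union> T4) = {}" "B1 \<inter> (T2 \<union> T4) = {}"
  unfolding A0_def A1_def B0_def B1_def Tdefs by auto

lemma cpd: "complete_paradoxical_decomposition G 3 3 ((!) [A0, A1, T5]) ((!) [B0, B1, T2 \<union> T4])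
   ((!) [g 1 \<otimes> g 1, g 3 \<otimes> g 1, g 3]) ((!) [(g 1 \<otimes> g 1) \<otimes> g 1, (g 3 \<otimes> g 1) \<otimes> g 1, g 2])"
proof -
  have p6: "indexed_partition G (Inl ` {..<3} \<union> Inr ` {..<3}) (case_sum ((!) [A0, A1, T5]) ((!) [B0, B1, T2 \<union> T4]))"
  proof -
    have dd: "X \<inter> Y = {} \<Longrightarrow> Y \<inter> X = {}" for X Y :: "'a set" by blast
    note D = disj6 disj6[THEN dd]
    show ?thesis unfolding indexed_partition_def lt3
      apply (rule conjI)
       apply (simp add: D)
      using cover6 by (auto simp: lt3)
  qed
  have c: "\<forall>i<3. [g 1 \<otimes> g 1, g 3 \<otimes> g 1, g 3] ! i \<in> carrier G"
          "\<forall>j<3. [(g 1 \<otimes> g 1) \<otimes> g 1, (g 3 \<otimes> g 1) \<otimes> g 1, g 2] ! j \<in> carrier G"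
    using g1 g2 g3 by (auto simp: less_Suc_eq numeral_eq_Suc)
  have d: "T3 \<inter> (T4 \<union> T5) = {}" "T3 \<inter> (T1 \<union> T2) = {}" "(T4 \<union> T5) \<inter> (T1 \<union> T2) = {}"
    unfolding Tdefs by auto
  have cv: "T3 \<union> (T4 \<union> T5) \<union> (T1 \<union> T2) = carrier G"
  proof
    show "T3 \<union> (T4 \<union> T5) \<union> (T1 \<union> T2) \<subseteq> carrier G" using T_sub by auto
    show "carrier G \<subseteq> T3 \<union> (T4 \<union> T5) \<union> (T1 \<union> T2)"
    proof
      fix x assume "x \<in> carrier G"
      from T_cover[OF this] show "x \<in> T3 \<union> (T4 \<union> T5) \<union> (T1 \<union> T2)" by blast
    qed
  qed
  have pa: "indexed_partition G {..<3} (\<lambda>i. (\<lambda>y. [g 1 \<otimes> g 1, g 3 \<otimes> g 1, g 3] ! i \<otimes> y) ` ([A0, A1, T5] ! i))"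
    unfolding ip3 using imA0 imA1 im4 d cv by simp
  have pb: "indexed_partition G {..<3} (\<lambda>i. (\<lambda>y. [(g 1 \<otimes> g 1) \<otimes> g 1, (g 3 \<otimes> g 1) \<otimes> g 1, g 2] ! i \<otimes> y) ` ([B0, B1, T2 \<union> T4] ! i))"
    unfolding ip3 using imB0 imB1 im5 d cv by simp
  show ?thesis unfolding complete_paradoxical_decomposition_def using p6 c pa pb by blast
qed

lemma tarski: "tarski_number G \<le> 7"
proof -
  have m: "(3,3) \<in> {(r, s). \<exists>A B a b. complete_paradoxical_decomposition G r s A B a b}"
    using cpd by blast
  have "tarski_number G \<le> enat (3+3)" unfolding tarski_number_def
    using INF_lower[OF m, of "\<lambda>rs. enat (fst rs + snd rs)"] by simp
  also have "\<dots> \<le> 7" by (simp add: numeral_eq_enat)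
  finally show ?thesis .
qed

end

lemma all5: "(\<forall>c<(5::nat). P c) \<longleftrightarrow> P 0 \<and> P 1 \<and> P 2 \<and> P 3 \<and> P 4"
  by (auto simp: less_Suc_eq numeral_eq_Suc)
lemma all4: "(\<forall>c<(4::nat). P c) \<longleftrightarrow> P 0 \<and> P 1 \<and> P 2 \<and> P 3"
  by (auto simp: less_Suc_eq numeral_eq_Suc)
lemma sum4: "(\<Sum>k<(4::nat). f k) = f 0 + f 1 + f 2 + (f 3::int)"
  by (simp add: numeral_eq_Suc lessThan_Suc)

lemma normal_ok:
  defines "cs \<equiv> [[1,2,3,2],[1,3,1,3],[2,1,2,2],[3,3,1,2],[3,3,2,1]] :: nat list list"
  shows "has_normal_subsystem cs"
proof -
  define sys where "sys = [(eq_vec cs 1 1, eq_vec cs 0 1), (eq_vec cs 1 2, eq_vec cs 2 2),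
     (eq_vec cs 0 2, eq_vec cs 3 2), (eq_vec cs 1 2, eq_vec cs 3 2)]"
  have "set sys \<subseteq> Eq_sys cs" unfolding sys_def Eq_sys_def by fastforce
  moreover have "normal_system (length cs) sys"
  proof -
    define P :: "nat \<Rightarrow> nat \<Rightarrow> int" where "P = (\<lambda>i j. if i = j then 1 else 0)"
    have pm: "is_perm_matrix 4 P" unfolding is_perm_matrix_def P_def by auto
    have l1: "length cs = 5" unfolding cs_def by simp
    have l2: "length sys = 4" unfolding sys_def by simp
    show ?thesis unfolding normal_system_def Let_def l1 l2
      apply (rule conjI)
       apply (simp only: all5 sum4)
       apply (simp add: sys_def cs_def eq_vec_def)
      apply (rule exI[of _ P])
      apply (simp only: pm simp_thms all5 all4 sum4 matmul_def)
      apply (simp add: sys_def cs_def eq_vec_def lower_ones_def shift_up_def P_def)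
      done
  qed
  moreover have "sys \<noteq> []" unfolding sys_def by simp
  ultimately show ?thesis unfolding has_normal_subsystem_def by blast
qed

theorem mainTheorem8:
  fixes G :: "('a, 'b) monoid_scheme" and g :: "nat \<Rightarrow> 'a" and E :: "nat \<Rightarrow> 'a set"
  assumes "group G"
    and "\<forall>i\<in>{1,2,3}. g i \<in> carrier G"
    and "indexed_partition G {1,2,3} E"
    and "Con G g E = {[1,2,3,2], [1,3,1,3], [2,1,2,2], [3,3,1,2], [3,3,2,1]}"
  shows "(\<exists>cs. distinct cs \<and> set cs = Con G g E \<and> has_normal_subsystem cs)
         \<and> \<not> amenable G
         \<and> tarski_number G \<le> 7"
proof -
  interpret cfgloc G g E
    by (rule cfgloc.intro[OF assms(1)], unfold_locales) (use assms in auto)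
  let ?cs = "[[1,2,3,2],[1,3,1,3],[2,1,2,2],[3,3,1,2],[3,3,2,1]] :: nat list list"
  have "distinct ?cs \<and> set ?cs = Con G g E \<and> has_normal_subsystem ?cs"
    using normal_ok assms(4) by simp
  thus ?thesis using not_amenable tarski by blast
qed

end
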